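(* For all integers $n\ge 3$ and real numbers $a\ge1$, $x\in(0,\pi)$, we have $S_{n,a}(x)\ge S_{n-2,a}(x)$.
   Context: For a real number $a$ and integers $0\le m$, the binomial coefficient is $\binom{m+a}{m}=\frac{(a+1)(a+2)\cdots(a+m)}{m!}$ (equal to $1$ when $m=0$). For an integer $n\ge1$ and real $a$, $S_{n,a}(x)=\sum_{j=1}^n\binom{n+a-j}{n-j}\sin(jx)$. *)

theory Defs
  imports Complex_Main
begin

definition binom_shift :: "nat \<Rightarrow> real \<Rightarrow> real" where
  "binom_shift m a = (real m + a) gchoose m"

definition S :: "nat \<Rightarrow> real \<Rightarrow> real \<Rightarrow> real" where
  "S n a x = (\<Sum>j=1..n. binom_shift (n - j) a * sin (real j * x))"

end

theory Submission
  imports Defs "HOL-Computational_Algebra.Formal_Power_Series"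
begin

lemma omx_nth:
  fixes G :: "real fps"
  shows "fps_nth ((1 - fps_X) * G) m = (if m = 0 then fps_nth G 0 else fps_nth G m - fps_nth G (m - 1))"
  by (simp add: algebra_simps)

lemma bs_pascal0: "binom_shift (Suc k) c = binom_shift k c + binom_shift (Suc k) (c - 1)"
proof -
  have "binom_shift (Suc k) c = ((real k + c) + 1) gchoose Suc k"
    unfolding binom_shift_def by (simp add: algebra_simps)
  also have "\<dots> = ((real k + c) gchoose k) + ((real k + c) gchoose Suc k)"
    by (rule gbinomial_Suc_Suc)
  finally show ?thesis unfolding binom_shift_def by (simp add: algebra_simps)
qed

lemma bs_fps: "(1 - fps_X) * Abs_fps (\<lambda>m. binom_shift m c) = Abs_fps (\<lambda>m. binom_shift m (c - 1))"
proof (rule fps_ext)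
  fix m show "fps_nth ((1 - fps_X) * Abs_fps (\<lambda>m. binom_shift m c)) m = fps_nth (Abs_fps (\<lambda>m. binom_shift m (c - 1))) m"
  proof (cases m)
    case 0 then show ?thesis by (simp add: omx_nth binom_shift_def)
  next
    case (Suc k)
    have "binom_shift (Suc k) c - binom_shift k c = binom_shift (Suc k) (c - 1)"
      using bs_pascal0[of k c] by linarith
    then show ?thesis using Suc by (simp add: omx_nth)
  qed
qed

lemma poch_nonneg: "(y::real) \<ge> 0 \<Longrightarrow> pochhammer y n \<ge> 0"
  by (induction n) (auto simp: pochhammer_Suc)

lemma bs_nonneg: assumes "c \<ge> -1" shows "binom_shift i c \<ge> 0"
proof -
  have "binom_shift i c = pochhammer (real i + c - real i + 1) i / fact i"
    unfolding binom_shift_def by (rule gbinomial_pochhammer')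
  also have "\<dots> = pochhammer (c + 1) i / fact i" by (simp add: algebra_simps)
  finally show ?thesis using assms poch_nonneg[of "c+1" i] by simp
qed

definition W :: "real fps" where "W = Abs_fps (\<lambda>m. if m = 0 then 1 else 2)"

lemma W_fps: "(1 - fps_X) * W = 1 + fps_X"
proof (rule fps_ext)
  fix m show "fps_nth ((1 - fps_X) * W) m = fps_nth (1 + fps_X) m"
  proof (cases m)
    case 0 then show ?thesis by (simp add: omx_nth W_def)
  next
    case (Suc k) then show ?thesis
      by (cases k) (simp_all add: omx_nth W_def)
  qed
qed

definition P :: "real \<Rightarrow> real fps" where "P x = Abs_fps (\<lambda>m. \<Sum>j=1..m. sin (real j * x))"
definition sf :: "real \<Rightarrow> real fps" where "sf x = Abs_fps (\<lambda>j. sin (real j * x))"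

lemma P_fps: "(1 - fps_X) * P x = sf x"
proof (rule fps_ext)
  fix m show "fps_nth ((1 - fps_X) * P x) m = fps_nth (sf x) m"
    by (cases m) (auto simp: omx_nth P_def sf_def)
qed

lemma Ws: "W * sf x = (1 + fps_X) * P x"
proof -
  have "(1 - fps_X) * (W * sf x) = (1 - fps_X) * ((1 + fps_X) * P x)"
    by (metis P_fps W_fps mult.assoc mult.commute)
  moreover have "(1 - fps_X :: real fps) \<noteq> 0"
  proof
    assume "(1 - fps_X :: real fps) = 0"
    then have "fps_nth (1 - fps_X :: real fps) 0 = 0" by simp
    then show False by simp
  qed
  ultimately show ?thesis by simp
qed

lemma P_closed: "2 * sin (x/2) * (\<Sum>j=1..m. sin (real j * x)) = cos (x/2) - cos ((real m + 1/2) * x)"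
proof (induction m)
  case 0 then show ?case by simp
next
  case (Suc m)
  have e: "2 * sin (x/2) * sin ((real m + 1) * x) = cos ((real m + 1/2) * x) - cos ((real m + 1 + 1/2) * x)"
  proof -
    have a: "(real m + 1/2) * x = (real m + 1) * x - x/2" by (simp add: algebra_simps)
    have b: "(real m + 1 + 1/2) * x = (real m + 1) * x + x/2" by (simp add: algebra_simps)
    show ?thesis unfolding a b cos_diff cos_add by simp
  qed
  show ?case using Suc e by (simp add: algebra_simps)
qed

lemma V_nonneg:
  assumes "0 < x" "x < pi"
  shows "fps_nth ((1 + fps_X) * P x) m \<ge> 0"
proof (cases m)
  case 0 then show ?thesis by (simp add: P_def)
next
  case (Suc k)
  have v: "fps_nth ((1 + fps_X) * P x) m = (\<Sum>j=1..m. sin (real j * x)) + (\<Sum>j=1..k. sin (real j * x))"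
    using Suc by (simp add: P_def algebra_simps)
  have sp: "sin (x/2) > 0" using assms by (intro sin_gt_zero) auto
  have cp: "cos (x/2) > 0" using assms by (intro cos_gt_zero_pi) auto
  have c: "cos ((real k + 1/2) * x) + cos ((real m + 1/2) * x) = 2 * cos (real m * x) * cos (x/2)"
  proof -
    have a: "(real k + 1/2) * x = real m * x - x/2" using Suc by (simp add: algebra_simps)
    have b: "(real m + 1/2) * x = real m * x + x/2" by (simp add: algebra_simps)
    show ?thesis unfolding a b cos_diff cos_add by simp
  qed
  have "2 * sin (x/2) * fps_nth ((1 + fps_X) * P x) m = 2 * cos (x/2) * (1 - cos (real m * x))"
    unfolding v distrib_left P_closed using c by (simp add: algebra_simps)
  moreover have "2 * cos (x/2) * (1 - cos (real m * x)) \<ge> 0"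
    using cp by (simp add: mult_nonneg_nonneg)
  ultimately have "0 \<le> 2 * sin (x/2) * fps_nth ((1 + fps_X) * P x) m" by simp
  then show ?thesis using sp by (simp add: zero_le_mult_iff)
qed

lemma S_fps: "S n a x = fps_nth (sf x * Abs_fps (\<lambda>m. binom_shift m a)) n"
proof -
  have "fps_nth (sf x * Abs_fps (\<lambda>m. binom_shift m a)) n = (\<Sum>i=0..n. sin (real i * x) * binom_shift (n - i) a)"
    by (simp add: fps_mult_nth sf_def)
  also have "\<dots> = (\<Sum>i=1..n. sin (real i * x) * binom_shift (n - i) a)"
    by (simp add: sum.atLeast_Suc_atMost)
  finally show ?thesis unfolding S_def by (simp add: mult.commute)
qed

theorem lemma2p6:
  fixes n :: nat and a x :: real
  assumes "n \<ge> 3" and "a \<ge> 1" and "0 < x" and "x < pi"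
  shows "S n a x \<ge> S (n - 2) a x"
proof -
  define B where "B = Abs_fps (\<lambda>m. binom_shift m a)"
  define D where "D = Abs_fps (\<lambda>m. binom_shift m (a - 1))"
  define F where "F = Abs_fps (\<lambda>m. binom_shift m (a - 1 - 1))"
  have BD: "(1 - fps_X) * B = D" unfolding B_def D_def by (rule bs_fps)
  have DF: "(1 - fps_X) * D = F" unfolding D_def F_def by (rule bs_fps)
  have key: "(1 - fps_X^2) * B = F * W"
  proof -
    have "(1 - fps_X^2) * B = (1 + fps_X) * ((1 - fps_X) * B)" by (simp add: algebra_simps power2_eq_square)
    also have "\<dots> = (1 + fps_X) * D" by (simp add: BD)
    also have "\<dots> = ((1 - fps_X) * W) * D" by (simp add: W_fps)
    also have "\<dots> = F * W" by (simp add: DF[symmetric] algebra_simps)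
    finally show ?thesis .
  qed
  have diff: "S n a x - S (n - 2) a x = fps_nth (sf x * ((1 - fps_X^2) * B)) n"
  proof -
    have "fps_nth (sf x * ((1 - fps_X^2) * B)) n = fps_nth (sf x * B) n - fps_nth (fps_X^2 * (sf x * B)) n"
      by (simp add: algebra_simps)
    also have "fps_nth (fps_X^2 * (sf x * B)) n = fps_nth (sf x * B) (n - 2)"
      using assms(1) by (simp add: fps_X_power_mult_nth)
    finally show ?thesis unfolding S_fps B_def by simp
  qed
  have "sf x * ((1 - fps_X^2) * B) = F * (W * sf x)"
    unfolding key by (simp only: ac_simps)
  then have "fps_nth (sf x * ((1 - fps_X^2) * B)) n = fps_nth (F * (W * sf x)) n" by (simp only:)
  also have "fps_nth (F * (W * sf x)) n = (\<Sum>i=0..n. fps_nth F i * fps_nth ((1 + fps_X) * P x) (n - i))"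
    by (simp only: Ws fps_mult_nth[of F])
  also have "\<dots> \<ge> 0"
    using assms bs_nonneg[of "a - 1 - 1"] V_nonneg
    by (intro sum_nonneg mult_nonneg_nonneg) (auto simp: F_def)
  finally show ?thesis using diff by simp
qed

end
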